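(* Let $\Gamma=([n],w)$ be a hypergraph with non-negative weights, $\rho\colon\mathrm{U}(n)\to\mathrm{U}(V)$ a finite-dimensional unitary representation, and $V'=\mathrm{TorInv}(\rho)^\perp$, which is invariant under ${\cal L}(\Gamma,\rho)$. Then every eigenvalue of the restriction of ${\cal L}(\Gamma,\rho)$ to $V'$ is at least $\phi(\Gamma)=\min_{i\in[n]}\sum_{B\ni i}w_B$.
   Context: A weighted hypergraph $\Gamma=([n],w)$ assigns $w_B\ge0$ to every $B\subseteq[n]$. $\mathrm{U}_B\le\mathrm{U}(n)$ is the subgroup of unitaries coinciding with the identity outside the minor indexed by $B$, with Haar probability measure $\mu_B$; ${\cal L}(\Gamma,\rho)=\sum_Bw_B[I-\int_{\mathrm{U}_B}\rho(A)d\mu_B(A)]$. $T_n$ is the diagonal subgroup of $\mathrm{U}(n)$ and $\mathrm{TorInv}(\rho)$ the subspace of vectors fixed by $\rho(T_n)$. *)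

theory Defs
  imports "HOL-Analysis.Analysis" "HOL-Probability.Probability"
begin

text \<open>Complex matrices are \<open>complex^'k^'k\<close>; the index type \<open>'n\<close> plays the role of [n].\<close>

definition cadj :: "complex^'k^'k \<Rightarrow> complex^'k^'k" where
  "cadj A = (\<chi> i j. cnj (A $ j $ i))"

definition unitary_mat :: "complex^'k^'k \<Rightarrow> bool" where
  "unitary_mat A \<longleftrightarrow> A ** cadj A = mat 1 \<and> cadj A ** A = mat 1"

definition unitary_group :: "(complex^'k^'k) set" where
  "unitary_group = {A. unitary_mat A}"

definition U_sub :: "'k set \<Rightarrow> (complex^'k^'k) set" where
  "U_sub B = {A \<in> unitary_group. \<forall>i j. (i \<notin> B \<or> j \<notin> B) \<longrightarrow>
      A $ i $ j = (if i = j then 1 else 0)}"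

definition torus :: "(complex^'k^'k) set" where
  "torus = {A \<in> unitary_group. \<forall>i j. i \<noteq> j \<longrightarrow> A $ i $ j = 0}"

definition is_haar_prob :: "(complex^'k^'k) measure \<Rightarrow> (complex^'k^'k) set \<Rightarrow> bool" where
  "is_haar_prob \<mu> G \<longleftrightarrow> prob_space \<mu> \<and> sets \<mu> = sets borel \<and> emeasure \<mu> G = 1 \<and>
     (\<forall>g\<in>G. \<forall>S\<in>sets borel. emeasure \<mu> ((\<lambda>A. g ** A) -` S) = emeasure \<mu> S)"

definition unitary_rep :: "(complex^'n^'n \<Rightarrow> complex^'m^'m) \<Rightarrow> bool" where
  "unitary_rep \<rho> \<longleftrightarrow> continuous_on unitary_group \<rho> \<and>
     (\<forall>A\<in>unitary_group. unitary_mat (\<rho> A)) \<and>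
     (\<forall>A\<in>unitary_group. \<forall>B\<in>unitary_group. \<rho> (A ** B) = \<rho> A ** \<rho> B)"

definition hinner :: "complex^'m \<Rightarrow> complex^'m \<Rightarrow> complex" where
  "hinner u v = (\<Sum>i\<in>UNIV. cnj (u $ i) * v $ i)"

definition TorInv :: "(complex^'n^'n \<Rightarrow> complex^'m^'m) \<Rightarrow> (complex^'m) set" where
  "TorInv \<rho> = {v. \<forall>t\<in>torus. \<rho> t *v v = v}"

definition orth_compl :: "(complex^'m) set \<Rightarrow> (complex^'m) set" where
  "orth_compl W = {v. \<forall>u\<in>W. hinner u v = 0}"

definition hyper_laplacian ::
  "('n set \<Rightarrow> real) \<Rightarrow> ('n set \<Rightarrow> (complex^'n^'n) measure) \<Rightarrow>
   (complex^'n^'n \<Rightarrow> complex^'m^'m) \<Rightarrow> complex^'m^'m" where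
  "hyper_laplacian w \<mu> \<rho> =
     (\<Sum>B\<in>(UNIV :: 'n set set). w B *\<^sub>R (mat 1 - (LINT A : U_sub B | \<mu> B. \<rho> A)))"

definition phi :: "('n::finite set \<Rightarrow> real) \<Rightarrow> real" where
  "phi w = Min ((\<lambda>i. \<Sum>B\<in>{B. i \<in> B}. w B) ` UNIV)"

end

theory Submission
  imports Defs
begin

lemma hinner_zero_right[simp]: "hinner x 0 = 0" by (simp add: hinner_def)
lemma hinner_zero_left[simp]: "hinner 0 x = 0" by (simp add: hinner_def)
lemma hinner_add_right: "hinner u (v + w) = hinner u v + hinner u w"
  by (simp add: hinner_def distrib_left sum.distrib)
lemma hinner_diff_right: "hinner u (v - w) = hinner u v - hinner u w"
  by (simp add: hinner_def right_diff_distrib sum_subtractf)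
lemma hinner_add_left: "hinner (u + v) w = hinner u w + hinner v w"
  by (simp add: hinner_def distrib_right sum.distrib)
lemma hinner_diff_left: "hinner (u - v) w = hinner u w - hinner v w"
  by (simp add: hinner_def left_diff_distrib sum_subtractf)
lemma hinner_smult_right: "hinner u (c *s v) = c * hinner u v"
  by (simp add: hinner_def sum_distrib_left algebra_simps)
lemma hinner_scaleR_right: "hinner u (c *\<^sub>R v) = of_real c * hinner u v"
proof -
  have "c *\<^sub>R v = of_real c *s v" by (auto simp: vec_eq_iff complex_eq_iff)
  then show ?thesis by (simp add: hinner_smult_right)
qed
lemma hinner_cnj: "cnj (hinner u v) = hinner v u"
  by (simp add: hinner_def mult.commute)
lemma hinner_sum_right: "hinner u (sum f S) = (\<Sum>x\<in>S. hinner u (f x))"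
  by (induction S rule: infinite_finite_induct) (simp_all add: hinner_add_right)
lemma hinner_self: "hinner x x = of_real ((norm x)\<^sup>2)"
proof -
  have "(norm x)\<^sup>2 = (\<Sum>i\<in>UNIV. (norm (x$i))\<^sup>2)"
    by (simp add: norm_vec_def L2_set_def sum_nonneg)
  then have "of_real ((norm x)\<^sup>2) = (\<Sum>i\<in>UNIV. of_real ((norm (x$i))\<^sup>2) :: complex)" by simp
  also have "\<dots> = hinner x x" unfolding hinner_def complex_norm_square
    by (simp add: mult.commute)
  finally show ?thesis by simp
qed

lemma pythag: "hinner a b = 0 \<Longrightarrow> (norm (a + b))\<^sup>2 = (norm a)\<^sup>2 + (norm b)\<^sup>2"
proof -
  assume h: "hinner a b = 0"
  have h2: "hinner b a = 0" using h hinner_cnj[of a b] by simp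
  have "complex_of_real ((norm (a + b))\<^sup>2) = hinner (a+b) (a+b)" by (simp add: hinner_self)
  also have "\<dots> = hinner a a + hinner b b" using h h2
    by (simp add: hinner_add_left hinner_add_right)
  also have "\<dots> = of_real ((norm a)\<^sup>2 + (norm b)\<^sup>2)" by (simp add: hinner_self)
  finally show ?thesis using of_real_eq_iff by blast
qed

lemma hinner_mat: "hinner (M *v x) y = hinner x (cadj M *v y)"
proof -
  have "hinner (M *v x) y = (\<Sum>i\<in>UNIV. \<Sum>j\<in>UNIV. cnj (M$i$j) * cnj (x$j) * y$i)"
    unfolding hinner_def matrix_vector_mult_def
    by (simp only: vec_lambda_beta cnj_sum complex_cnj_mult sum_distrib_right)
  also have "\<dots> = (\<Sum>j\<in>UNIV. \<Sum>i\<in>UNIV. cnj (M$i$j) * cnj (x$j) * y$i)"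
    by (rule sum.swap)
  also have "\<dots> = hinner x (cadj M *v y)"
    unfolding hinner_def matrix_vector_mult_def cadj_def
    by (simp only: vec_lambda_beta sum_distrib_left) (simp only: mult.commute mult.left_commute)
  finally show ?thesis .
qed

lemma cadj_mult: "cadj (A ** B) = cadj B ** cadj A"
  unfolding cadj_def matrix_matrix_mult_def
  by (simp only: vec_eq_iff vec_lambda_beta cnj_sum complex_cnj_mult) (simp only: mult.commute, simp)

lemma norm_unitary: "unitary_mat U \<Longrightarrow> norm (U *v x) = norm x"
proof -
  assume "unitary_mat U"
  then have "cadj U ** U = mat 1" by (simp add: unitary_mat_def)
  then have "hinner (U *v x) (U *v x) = hinner x x"
    by (simp add: hinner_mat matrix_vector_mul_assoc)
  then have "complex_of_real ((norm (U *v x))\<^sup>2) = complex_of_real ((norm x)\<^sup>2)" by (simp only: hinner_self[symmetric])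
  then have "(norm (U *v x))\<^sup>2 = (norm x)\<^sup>2" using of_real_eq_iff by blast
  then show ?thesis by (simp add: power2_eq_iff_nonneg)
qed

lemma sum_single_UNIV: "(\<And>l. l \<noteq> i \<Longrightarrow> f l = 0) \<Longrightarrow> (\<Sum>l\<in>(UNIV::'a::finite set). f l) = (f i :: 'b::comm_monoid_add)"
proof -
  assume h: "\<And>l. l \<noteq> i \<Longrightarrow> f l = 0"
  have "(\<Sum>l\<in>UNIV. f l) = f i + (\<Sum>l\<in>UNIV - {i}. f l)" by (rule sum.remove) auto
  also have "(\<Sum>l\<in>UNIV - {i}. f l) = 0" using h by (intro sum.neutral) auto
  finally show ?thesis by simp
qed

lemma unitary_mult: "unitary_mat A \<Longrightarrow> unitary_mat B \<Longrightarrow> unitary_mat (A ** B)"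
  unfolding unitary_mat_def cadj_mult
  by (metis matrix_mul_assoc matrix_mul_rid)

lemma usub_entry: "A \<in> U_sub B \<Longrightarrow> i \<notin> B \<or> j \<notin> B \<Longrightarrow> A$i$j = (if i=j then 1 else 0)"
  by (auto simp: U_sub_def)

lemma usub_unitary: "A \<in> U_sub B \<Longrightarrow> unitary_mat A"
  by (auto simp: U_sub_def unitary_group_def)

lemma usub_ug: "U_sub B \<subseteq> unitary_group"
  by (auto simp: U_sub_def)

lemma usub_mono: "j \<in> B \<Longrightarrow> U_sub {j} \<subseteq> U_sub B"
  by (auto simp: U_sub_def)

lemma cadj_mat1: "cadj (mat 1) = (mat 1 :: complex^'k^'k)"
  by (auto simp: cadj_def mat_def vec_eq_iff)

lemma mat1_unitary: "unitary_mat (mat 1 :: complex^'k^'k)"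
  by (simp add: unitary_mat_def cadj_mat1 matrix_mul_lid)

lemma mat1_usub: "mat 1 \<in> U_sub B"
  using mat1_unitary by (auto simp: U_sub_def unitary_group_def mat_def)

lemma usub_mult: assumes g: "g \<in> U_sub B" and A: "A \<in> U_sub B" shows "g ** A \<in> U_sub B"
proof -
  have u: "unitary_mat (g ** A)" using unitary_mult usub_unitary g A by blast
  have "(g ** A)$i$j = (if i=j then 1 else 0)" if "i \<notin> B \<or> j \<notin> B" for i j
  proof (cases "i \<notin> B")
    case True
    have "(g ** A)$i$j = (\<Sum>l\<in>UNIV. g$i$l * A$l$j)" by (simp add: matrix_matrix_mult_def)
    also have "\<dots> = g$i$i * A$i$j"
      by (rule sum_single_UNIV) (simp add: usub_entry[OF g] True)
    also have "\<dots> = (if i=j then 1 else 0)" using usub_entry[OF g] usub_entry[OF A] True by simp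
    finally show ?thesis .
  next
    case False
    then have jB: "j \<notin> B" using that by blast
    have "(g ** A)$i$j = (\<Sum>l\<in>UNIV. g$i$l * A$l$j)" by (simp add: matrix_matrix_mult_def)
    also have "\<dots> = g$i$j * A$j$j"
      by (rule sum_single_UNIV) (simp add: usub_entry[OF A] jB)
    also have "\<dots> = (if i=j then 1 else 0)" using usub_entry[OF g] usub_entry[OF A] jB by simp
    finally show ?thesis .
  qed
  then show ?thesis using u by (auto simp: U_sub_def unitary_group_def)
qed

lemma usub_comm: assumes g: "g \<in> U_sub B" and t: "t \<in> U_sub {k}" and k: "k \<notin> B"
  shows "g ** t = t ** g"
proof -
  have td: "t$i$j = 0" if "i \<noteq> j" for i j using usub_entry[OF t, of i j] that by auto
  have "(g ** t)$i$j = (t ** g)$i$j" for i j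
  proof -
    have 1: "(g ** t)$i$j = g$i$j * t$j$j"
      by (simp add: matrix_matrix_mult_def) (rule sum_single_UNIV, simp add: td)
    have 2: "(t ** g)$i$j = t$i$i * g$i$j"
      by (simp add: matrix_matrix_mult_def) (rule sum_single_UNIV, simp add: td)
    show ?thesis
    proof (cases "i = j")
      case True then show ?thesis using 1 2 by simp
    next
      case False
      show ?thesis
      proof (cases "i \<in> B \<and> j \<in> B")
        case True
        then have "i \<noteq> k" "j \<noteq> k" using k by auto
        then have "t$i$i = 1" "t$j$j = 1" using usub_entry[OF t] by auto
        then show ?thesis using 1 2 by simp
      next
        case False2: False
        then have "g$i$j = 0" using usub_entry[OF g, of i j] False by auto
        then show ?thesis using 1 2 by simp
      qed
    qed
  qed
  then show ?thesis by (simp add: vec_eq_iff)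
qed

lemma diag_unitary: assumes "\<And>i j. i \<noteq> j \<Longrightarrow> D$i$j = 0" and "\<And>i. D$i$i * cnj (D$i$i) = 1"
  shows "unitary_mat D"
proof -
  have "(D ** cadj D)$i$j = mat 1 $i$j" for i j
  proof -
    have "(D ** cadj D)$i$j = D$i$j * cnj (D$j$j)"
      by (simp add: matrix_matrix_mult_def cadj_def) (rule sum_single_UNIV, simp add: assms(1))
    then show ?thesis using assms by (simp add: mat_def)
  qed
  moreover have "(cadj D ** D)$i$j = mat 1 $i$j" for i j
  proof -
    have "(cadj D ** D)$i$j = cnj (D$i$i) * D$i$j"
      by (simp add: matrix_matrix_mult_def cadj_def) (rule sum_single_UNIV, simp add: assms(1))
    then show ?thesis using assms by (simp add: mat_def mult.commute)
  qed
  ultimately show ?thesis by (simp add: unitary_mat_def vec_eq_iff)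
qed

lemma torus_diag: assumes "t \<in> torus" shows "t$i$i * cnj (t$i$i) = 1"
proof -
  have "t ** cadj t = mat 1" using assms by (simp add: torus_def unitary_group_def unitary_mat_def)
  then have "(t ** cadj t)$i$i = 1" by (simp add: mat_def)
  moreover have "(t ** cadj t)$i$i = t$i$i * cnj (t$i$i)"
    using assms by (simp add: matrix_matrix_mult_def cadj_def) (rule sum_single_UNIV, simp add: torus_def)
  ultimately show ?thesis by simp
qed

lemma bl_mv: "bounded_linear (\<lambda>N::complex^'m::finite^'k::finite. N *v x)"
proof -
  have "linear (\<lambda>N::complex^'m^'k. N *v x)"
    by (rule linearI) (simp_all add: vec_eq_iff matrix_vector_mult_def scaleR_sum_right sum.distrib distrib_right)
  then show ?thesis using linear_conv_bounded_linear by blast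
qed

lemma bl_ml: "bounded_linear (\<lambda>N::complex^'m::finite^'m. G ** N)"
proof -
  have "linear (\<lambda>N::complex^'m^'m. G ** N)"
    by (rule linearI) (simp_all add: vec_eq_iff matrix_matrix_mult_def scaleR_sum_right sum.distrib distrib_left)
  then show ?thesis using linear_conv_bounded_linear by blast
qed

lemma bl_mr: "bounded_linear (\<lambda>N::complex^'m::finite^'m. N ** G)"
proof -
  have "linear (\<lambda>N::complex^'m^'m. N ** G)"
    by (rule linearI) (simp_all add: vec_eq_iff matrix_matrix_mult_def scaleR_sum_right sum.distrib distrib_right)
  then show ?thesis using linear_conv_bounded_linear by blast
qed

lemma unitary_row_norm: assumes "unitary_mat N" shows "norm (N$i) = 1"
proof -
  have "N ** cadj N = mat 1" using assms by (simp add: unitary_mat_def)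
  then have "(N ** cadj N)$i$i = 1" by (simp add: mat_def)
  moreover have "(N ** cadj N)$i$i = hinner (N$i) (N$i)"
    by (simp add: matrix_matrix_mult_def cadj_def hinner_def mult.commute)
  ultimately have "complex_of_real ((norm (N$i))\<^sup>2) = 1" by (simp add: hinner_self)
  then have "(norm (N$i))\<^sup>2 = 1" by (metis of_real_eq_1_iff)
  then show ?thesis using norm_ge_zero[of "N$i"] by (auto simp: power2_eq_1_iff)
qed

lemma unitary_norm_bound: assumes "unitary_mat (N::complex^'m::finite^'m)" shows "norm N \<le> real CARD('m)"
proof -
  have "norm N = L2_set (\<lambda>i. norm (N$i)) UNIV" by (simp add: norm_vec_def)
  also have "\<dots> \<le> (\<Sum>i\<in>UNIV. norm (N$i))" by (rule L2_set_le_sum) simp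
  also have "\<dots> = real CARD('m)" using unitary_row_norm[OF assms] by simp
  finally show ?thesis .
qed

context
  fixes M :: "(complex^'n::finite^'n) measure" and U :: "(complex^'n^'n) set"
    and \<rho> :: "complex^'n^'n \<Rightarrow> complex^'m::finite^'m"
  assumes hp: "is_haar_prob M U" and rep: "unitary_rep \<rho>" and Uug: "U \<subseteq> unitary_group"
    and Ucl: "\<And>g A. g \<in> U \<Longrightarrow> A \<in> U \<Longrightarrow> g ** A \<in> U"
begin

lemma hp_prob: "prob_space M" using hp by (simp add: is_haar_prob_def)
lemma hp_sets: "sets M = sets borel" using hp by (simp add: is_haar_prob_def)
lemma hp_space: "space M = UNIV" using sets_eq_imp_space_eq[OF hp_sets] by simp
lemma hp_U1: "emeasure M U = 1" using hp by (simp add: is_haar_prob_def)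
lemma hp_Usets: "U \<in> sets M" using hp_U1 emeasure_notin_sets by fastforce
lemma hp_Umeas: "measure M U = 1" using hp_U1 by (simp add: measure_def)
lemma hp_AE: "AE A in M. A \<in> U"
  using prob_space.AE_prob_1[OF hp_prob hp_Umeas] .

lemma f_meas: "(\<lambda>A. indicator U A *\<^sub>R \<rho> A) \<in> borel_measurable M"
proof -
  have c: "continuous_on U \<rho>" using rep Uug continuous_on_subset by (auto simp: unitary_rep_def)
  have "(\<lambda>A. indicator U A *\<^sub>R \<rho> A) \<in> borel_measurable borel"
    by (rule borel_measurable_continuous_on_indicator) (use hp_Usets hp_sets c in auto)
  then show ?thesis using measurable_cong_sets[OF hp_sets refl] by blast
qed

lemma f_int: "integrable M (\<lambda>A. indicator U A *\<^sub>R \<rho> A)"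
proof -
  interpret prob_space M by (rule hp_prob)
  have "AE A in M. norm (indicator U A *\<^sub>R \<rho> A) \<le> real CARD('m)"
  proof (rule AE_I2)
    fix A
    show "norm (indicator U A *\<^sub>R \<rho> A) \<le> real CARD('m)"
    proof (cases "A \<in> U")
      case True
      then have "unitary_mat (\<rho> A)" using rep Uug by (auto simp: unitary_rep_def)
      then show ?thesis using True unitary_norm_bound by auto
    qed simp
  qed
  then show ?thesis by (rule integrable_const_bound[OF _ f_meas])
qed

lemma P_def': "(LINT A:U|M. \<rho> A) = integral\<^sup>L M (\<lambda>A. indicator U A *\<^sub>R \<rho> A)"
  by (simp add: set_lebesgue_integral_def)

lemma P_apply: "(LINT A:U|M. \<rho> A) *v x = integral\<^sup>L M (\<lambda>A. indicator U A *\<^sub>R (\<rho> A *v x))"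
proof -
  have "(LINT A:U|M. \<rho> A) *v x = integral\<^sup>L M (\<lambda>A. (indicator U A *\<^sub>R \<rho> A) *v x)"
    unfolding P_def' by (rule integral_bounded_linear[OF bl_mv f_int, symmetric])
  also have "\<dots> = integral\<^sup>L M (\<lambda>A. indicator U A *\<^sub>R (\<rho> A *v x))"
    by (rule Bochner_Integration.integral_cong) (auto simp: indicator_def)
  finally show ?thesis .
qed

lemma P_left: assumes g: "g \<in> U" shows "\<rho> g ** (LINT A:U|M. \<rho> A) = (LINT A:U|M. \<rho> A)"
proof -
  let ?f = "\<lambda>A. indicator U A *\<^sub>R \<rho> A"
  have gm: "(\<lambda>A. g ** A) \<in> measurable M M"
  proof -
    have "linear (\<lambda>A::complex^'n^'n. g ** A)"
      by (rule linearI) (simp_all add: vec_eq_iff matrix_matrix_mult_def scaleR_sum_right sum.distrib distrib_left)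
    then have "continuous_on UNIV (\<lambda>A::complex^'n^'n. g ** A)"
      using linear_continuous_on linear_conv_bounded_linear by blast
    then have "(\<lambda>A::complex^'n^'n. g ** A) \<in> borel_measurable borel"
      using borel_measurable_continuous_onI by blast
    then show ?thesis using measurable_cong_sets[OF hp_sets hp_sets] by blast
  qed
  have distr_eq: "distr M M (\<lambda>A. g ** A) = M"
  proof (rule measure_eqI)
    show "sets (distr M M (\<lambda>A. g ** A)) = sets M" by simp
    fix S assume "S \<in> sets (distr M M (\<lambda>A. g ** A))"
    then have S: "S \<in> sets borel" using hp_sets by simp
    have "emeasure (distr M M (\<lambda>A. g ** A)) S = emeasure M ((\<lambda>A. g ** A) -` S \<inter> space M)"
      using S hp_sets gm by (simp add: emeasure_distr)
    also have "\<dots> = emeasure M ((\<lambda>A. g ** A) -` S)" by (simp add: hp_space)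
    also have "\<dots> = emeasure M S" using hp g S by (simp add: is_haar_prob_def)
    finally show "emeasure (distr M M (\<lambda>A. g ** A)) S = emeasure M S" .
  qed
  have "\<rho> g ** (LINT A:U|M. \<rho> A) = integral\<^sup>L M (\<lambda>A. \<rho> g ** ?f A)"
    unfolding P_def' by (rule integral_bounded_linear[OF bl_ml f_int, symmetric])
  also have "\<dots> = integral\<^sup>L M (\<lambda>A. ?f (g ** A))"
  proof (rule integral_cong_AE)
    show "(\<lambda>A. \<rho> g ** ?f A) \<in> borel_measurable M"
      using f_meas borel_measurable_continuous_on[OF linear_continuous_on[OF bl_ml]] by blast
    show "(\<lambda>A. ?f (g ** A)) \<in> borel_measurable M"
      using measurable_comp[OF gm f_meas] by (simp add: comp_def)
    show "AE A in M. \<rho> g ** ?f A = ?f (g ** A)"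
      using hp_AE
    proof (rule AE_mp, intro AE_I2 impI)
      fix A assume A: "A \<in> U"
      have "\<rho> (g ** A) = \<rho> g ** \<rho> A" using rep g A Uug by (auto simp: unitary_rep_def)
      then show "\<rho> g ** ?f A = ?f (g ** A)" using A Ucl[OF g A] by simp
    qed
  qed
  also have "\<dots> = integral\<^sup>L (distr M M (\<lambda>A. g ** A)) ?f"
    by (rule integral_distr[symmetric, OF gm f_meas])
  also have "\<dots> = (LINT A:U|M. \<rho> A)" unfolding distr_eq P_def' ..
  finally show ?thesis .
qed

lemma P_range: "\<forall>g\<in>U. \<rho> g *v ((LINT A:U|M. \<rho> A) *v x) = (LINT A:U|M. \<rho> A) *v x"
  using P_left by (simp add: matrix_vector_mul_assoc)

lemma P_fix: assumes "\<forall>g\<in>U. \<rho> g *v y = y" shows "(LINT A:U|M. \<rho> A) *v y = y"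
proof -
  have "(LINT A:U|M. \<rho> A) *v y = integral\<^sup>L M (\<lambda>A. indicator U A *\<^sub>R y)"
    unfolding P_apply by (rule Bochner_Integration.integral_cong) (auto simp: indicator_def assms)
  also have "\<dots> = integral\<^sup>L M (indicator U) *\<^sub>R y"
    by (rule integral_scaleR_left) (simp add: integrable_indicator_iff hp_space hp_Usets hp_U1)
  also have "\<dots> = y" using hp_Umeas hp_space by simp
  finally show ?thesis .
qed

lemma P_contr: "norm ((LINT A:U|M. \<rho> A) *v x) \<le> norm x"
proof -
  have "norm ((LINT A:U|M. \<rho> A) *v x) \<le> (\<integral>A. norm (indicator U A *\<^sub>R (\<rho> A *v x)) \<partial>M)"
    unfolding P_apply by (rule integral_norm_bound)
  also have "\<dots> = (\<integral>A. indicator U A * norm x \<partial>M)"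
  proof (rule Bochner_Integration.integral_cong)
    fix A
    show "norm (indicator U A *\<^sub>R (\<rho> A *v x)) = indicator U A * norm x"
    proof (cases "A \<in> U")
      case True
      then have "unitary_mat (\<rho> A)" using rep Uug by (auto simp: unitary_rep_def)
      then show ?thesis using True norm_unitary by simp
    qed simp
  qed simp
  also have "\<dots> = norm x" using hp_Umeas hp_space by simp
  finally show ?thesis .
qed

lemma P_comm: assumes "\<And>A. A \<in> U \<Longrightarrow> \<rho> g ** \<rho> A = \<rho> A ** \<rho> g"
  shows "\<rho> g ** (LINT A:U|M. \<rho> A) = (LINT A:U|M. \<rho> A) ** \<rho> g"
proof -
  let ?f = "\<lambda>A. indicator U A *\<^sub>R \<rho> A"
  have "\<rho> g ** (LINT A:U|M. \<rho> A) = integral\<^sup>L M (\<lambda>A. \<rho> g ** ?f A)"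
    unfolding P_def' by (rule integral_bounded_linear[OF bl_ml f_int, symmetric])
  also have "\<dots> = integral\<^sup>L M (\<lambda>A. ?f A ** \<rho> g)"
    by (rule Bochner_Integration.integral_cong) (auto simp: indicator_def assms)
  also have "\<dots> = (LINT A:U|M. \<rho> A) ** \<rho> g"
    unfolding P_def' by (rule integral_bounded_linear[OF bl_mr f_int])
  finally show ?thesis .
qed

end

lemma mv_diff_right: "(A::complex^'m::finite^'k::finite) *v (a - b) = A *v a - A *v b"
  by (simp add: vec_eq_iff matrix_vector_mult_def sum_subtractf right_diff_distrib)
lemma mv_add_right: "(A::complex^'m::finite^'k::finite) *v (a + b) = A *v a + A *v b"
  by (simp add: vec_eq_iff matrix_vector_mult_def sum.distrib distrib_left)
lemma mv_smult_right: "(A::complex^'m::finite^'k::finite) *v (c *s a) = c *s (A *v a)"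
  by (simp add: vec_eq_iff matrix_vector_mult_def sum_distrib_left mult.left_commute)
lemma mv_scaleR_left: "(c *\<^sub>R (A::complex^'m::finite^'k::finite)) *v a = c *\<^sub>R (A *v a)"
  by (simp add: vec_eq_iff matrix_vector_mult_def scaleR_sum_right)
lemma mv_sum: "(sum f S) *v (x::complex^'m::finite) = (\<Sum>i\<in>S. f i *v x)"
  by (induction S rule: infinite_finite_induct) (simp_all add: matrix_vector_mult_add_rdistrib)
lemma hinner_smult_left: "hinner (c *s u) v = cnj c * hinner u v"
  by (simp add: hinner_def sum_distrib_left mult.assoc)

lemma contr_proj_orth:
  fixes P :: "complex^'m::finite^'m"
  assumes idem: "\<And>x. P *v (P *v x) = P *v x" and contr: "\<And>x. norm (P *v x) \<le> norm x"
  shows "hinner (P *v a) (b - P *v b) = 0"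
proof (rule ccontr)
  define x where "x = P *v a"
  define y where "y = b - P *v b"
  define c where "c = hinner x y"
  assume "hinner (P *v a) (b - P *v b) \<noteq> 0"
  then have c0: "c \<noteq> 0" by (simp add: c_def x_def y_def)
  define n where "n = (norm y)\<^sup>2"
  define k where "k = (cmod c)\<^sup>2"
  define s where "s = 1 / (n + 1)"
  define t where "t = - (of_real s * cnj c)"
  have n0: "n \<ge> 0" by (simp add: n_def)
  have k0: "k > 0" using c0 by (simp add: k_def)
  have s0: "s > 0" using n0 by (simp add: s_def)
  have sn: "s * n < 1" using n0 by (simp add: s_def)
  have Py: "P *v y = 0" by (simp add: y_def mv_diff_right idem)
  have Px: "P *v x = x" by (simp add: x_def idem)
  have "P *v (x + t *s y) = x" by (simp add: mv_add_right mv_smult_right Py Px)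
  then have le: "norm x \<le> norm (x + t *s y)" using contr by metis
  have cc: "c * cnj c = of_real k" unfolding k_def by (rule complex_norm_square[symmetric])
  have "complex_of_real ((norm (x + t *s y))\<^sup>2) = hinner (x + t *s y) (x + t *s y)" by (simp add: hinner_self)
  also have "\<dots> = hinner x x + t * c + cnj t * cnj c + cnj t * t * hinner y y"
    by (simp add: hinner_add_left hinner_add_right hinner_smult_left hinner_smult_right c_def
        hinner_cnj[symmetric, of x y] algebra_simps)
  also have "\<dots> = of_real ((norm x)\<^sup>2) - 2 * of_real s * (c * cnj c) + of_real s ^ 2 * (c * cnj c) * of_real n"
    by (simp add: hinner_self n_def t_def algebra_simps power2_eq_square)
  also have "\<dots> = of_real ((norm x)\<^sup>2 - 2 * s * k + s^2 * k * n)" by (simp add: cc)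
  finally have eq: "(norm (x + t *s y))\<^sup>2 = (norm x)\<^sup>2 - 2 * s * k + s^2 * k * n"
    using of_real_eq_iff by blast
  have "(norm x)\<^sup>2 \<le> (norm (x + t *s y))\<^sup>2" using le by (simp add: power_mono)
  then have "0 \<le> s * k * (s * n - 2)" using eq by (simp add: algebra_simps power2_eq_square)
  moreover have "s * k * (s * n - 2) < 0" using s0 k0 sn by (simp add: mult_pos_neg)
  ultimately show False by simp
qed

lemma torus_fix:
  fixes \<rho> :: "complex^'n::finite^'n \<Rightarrow> complex^'m::finite^'m"
  assumes rep: "unitary_rep \<rho>" and h: "\<And>k g. g \<in> U_sub {k} \<Longrightarrow> \<rho> g *v y = y"
  shows "\<forall>t\<in>torus. \<rho> t *v y = y"
proof -
  have "finite S \<Longrightarrow> \<forall>t\<in>torus. (\<forall>i. i \<notin> S \<longrightarrow> t$i$i = 1) \<longrightarrow> \<rho> t *v y = y" for S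
  proof (induction S rule: finite_induct)
    case empty
    show ?case
    proof (intro ballI impI)
      fix t :: "complex^'n^'n" assume t: "t \<in> torus" and d: "\<forall>i. i \<notin> {} \<longrightarrow> t$i$i = 1"
      have "t = mat 1" using t d by (auto simp: vec_eq_iff mat_def torus_def)
      then show "\<rho> t *v y = y" using h mat1_usub by metis
    qed
  next
    case (insert k S)
    show ?case
    proof (intro ballI impI)
      fix t :: "complex^'n^'n" assume t: "t \<in> torus" and d: "\<forall>i. i \<notin> insert k S \<longrightarrow> t$i$i = 1"
      define t' where "t' = (\<chi> i j. if i = k \<and> j = k then 1 else t$i$j)"
      define e where "e = (\<chi> i j. if i = j then (if i = k then t$k$k else 1) else (0::complex))"
      have toff: "t$i$j = 0" if "i \<noteq> j" for i j using t that by (auto simp: torus_def)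
      have t'u: "unitary_mat t'"
        by (rule diag_unitary) (auto simp: t'_def toff torus_diag[OF t])
      have t'T: "t' \<in> torus" using t'u by (auto simp: torus_def unitary_group_def t'_def toff)
      have eu: "unitary_mat e"
        by (rule diag_unitary) (auto simp: e_def torus_diag[OF t])
      have eU: "e \<in> U_sub {k}" using eu by (auto simp: U_sub_def unitary_group_def e_def)
      have prod: "t = t' ** e"
      proof -
        have "(t' ** e)$i$j = t'$i$j * e$j$j" for i j
          by (simp add: matrix_matrix_mult_def) (rule sum_single_UNIV, simp add: e_def)
        then show ?thesis by (auto simp: vec_eq_iff t'_def e_def toff)
      qed
      have "\<rho> t = \<rho> t' ** \<rho> e" using rep prod t'u eu by (simp add: unitary_rep_def unitary_group_def)
      then have "\<rho> t *v y = \<rho> t' *v (\<rho> e *v y)" by (simp add: matrix_vector_mul_assoc)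
      also have "\<dots> = \<rho> t' *v y" using h eU by simp
      also have "\<dots> = y" using insert.IH t'T d by (auto simp: t'_def)
      finally show "\<rho> t *v y = y" .
    qed
  qed
  from this[of UNIV] show ?thesis by simp
qed

theorem lemma3p10:
  fixes w :: "'n::finite set \<Rightarrow> real"
    and \<mu> :: "'n set \<Rightarrow> (complex^'n^'n) measure"
    and \<rho> :: "complex^'n^'n \<Rightarrow> complex^'m::finite^'m"
    and lam :: complex and v :: "complex^'m"
  assumes "\<And>B. w B \<ge> 0"
    and "\<And>B. is_haar_prob (\<mu> B) (U_sub B)"
    and "unitary_rep \<rho>"
    and "v \<in> orth_compl (TorInv \<rho>)" and "v \<noteq> 0"
    and "hyper_laplacian w \<mu> \<rho> *v v = lam *s v"
  shows "Im lam = 0 \<and> Re lam \<ge> phi w"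
proof -
  note w0 = assms(1) and hp = assms(2) and rep = assms(3) and vperp = assms(4) and v0 = assms(5)
    and eig = assms(6)
  define P where "P B = (LINT A:U_sub B|\<mu> B. \<rho> A)" for B
  define Inv where "Inv G = {x. \<forall>g\<in>G. \<rho> g *v x = x}" for G
  have P_range: "P B *v x \<in> Inv (U_sub B)" for B x
    using P_range[OF hp rep usub_ug usub_mult] by (simp add: P_def Inv_def)
  have P_fix: "y \<in> Inv (U_sub B) \<Longrightarrow> P B *v y = y" for B y
    using P_fix[OF hp rep usub_ug usub_mult] by (simp add: P_def Inv_def)
  have P_idem: "P B *v (P B *v x) = P B *v x" for B x using P_range P_fix by blast
  have P_contr: "norm (P B *v x) \<le> norm x" for B x
    using P_contr[OF hp rep usub_ug usub_mult] by (simp add: P_def)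
  have P_orth: "hinner (P B *v a) (b - P B *v b) = 0" for B a b
    by (rule contr_proj_orth[OF P_idem P_contr])
  have P_sa: "hinner a (P B *v b) = hinner (P B *v a) b" for B a b
  proof -
    have 1: "hinner (P B *v a) b = hinner (P B *v a) (P B *v b)"
      using P_orth[of B a b] by (simp add: hinner_diff_right)
    have "hinner (P B *v b) (a - P B *v a) = 0" by (rule P_orth)
    then have "hinner (a - P B *v a) (P B *v b) = 0" using hinner_cnj by (metis complex_cnj_zero)
    then have 2: "hinner a (P B *v b) = hinner (P B *v a) (P B *v b)" by (simp add: hinner_diff_left)
    show ?thesis using 1 2 by simp
  qed
  have rho_mult: "\<rho> (A ** B) = \<rho> A ** \<rho> B" if "A \<in> unitary_group" "B \<in> unitary_group" for A B
    using rep that by (simp add: unitary_rep_def)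
  have Q_pres: "P {k} *v y \<in> Inv (U_sub B)" if y: "y \<in> Inv (U_sub B)" for k B y
  proof (cases "k \<in> B")
    case True
    then have "y \<in> Inv (U_sub {k})" using y usub_mono[OF True] by (auto simp: Inv_def)
    then show ?thesis using P_fix y by simp
  next
    case False
    have comm: "\<rho> g ** \<rho> A = \<rho> A ** \<rho> g" if "g \<in> U_sub B" "A \<in> U_sub {k}" for g A
      using usub_comm[OF that False] rho_mult usub_ug that by (metis subsetD)
    have PC: "\<rho> g ** P {k} = P {k} ** \<rho> g" if "g \<in> U_sub B" for g
      unfolding P_def by (rule P_comm[OF hp rep usub_ug usub_mult]) (blast, blast, erule comm[OF that])
    have "\<rho> g *v (P {k} *v y) = P {k} *v y" if g: "g \<in> U_sub B" for g
    proof -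
      have "\<rho> g *v (P {k} *v y) = (\<rho> g ** P {k}) *v y" by (simp add: matrix_vector_mul_assoc)
      also have "\<dots> = (P {k} ** \<rho> g) *v y" using PC[OF g] by simp
      also have "\<dots> = P {k} *v (\<rho> g *v y)" by (simp add: matrix_vector_mul_assoc)
      also have "\<dots> = P {k} *v y" using y g by (simp add: Inv_def)
      finally show ?thesis .
    qed
    then show ?thesis by (simp add: Inv_def)
  qed
  have Inv_mono: "j \<in> B \<Longrightarrow> Inv (U_sub B) \<subseteq> Inv (U_sub {j})" for j B
    using usub_mono by (auto simp: Inv_def)
  define pl where "pl ks z = foldl (\<lambda>z k. P {k} *v z) z ks" for ks z
  have pl_snoc: "pl (ys @ [k]) z = P {k} *v pl ys z" for ys k z by (simp add: pl_def)
  have pl_nil: "pl [] z = z" for z by (simp add: pl_def)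
  have pl_pres: "y \<in> Inv (U_sub B) \<Longrightarrow> pl ks y \<in> Inv (U_sub B)" for ks y B
    by (induction ks rule: rev_induct) (simp_all add: pl_nil pl_snoc Q_pres)
  have pl_diff: "pl ks (a - b) = pl ks a - pl ks b" for ks a b
    by (induction ks rule: rev_induct) (simp_all add: pl_nil pl_snoc mv_diff_right)
  define e where "e j z = z - P {j} *v z" for j z
  have e_diff: "e j (a - b) = e j a - e j b" for j a b by (simp add: e_def mv_diff_right)
  have tele: "(norm z)\<^sup>2 = (\<Sum>p<length ks. (norm (e (ks!p) (pl (take p ks) z)))\<^sup>2) + (norm (pl ks z))\<^sup>2"
    for ks z
  proof (induction ks rule: rev_induct)
    case Nil then show ?case by (simp add: pl_nil)
  next
    case (snoc k ys)
    have py: "(norm (pl ys z))\<^sup>2 = (norm (P {k} *v pl ys z))\<^sup>2 + (norm (e k (pl ys z)))\<^sup>2"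
    proof -
      have "pl ys z = P {k} *v pl ys z + e k (pl ys z)" by (simp add: e_def)
      then have "(norm (pl ys z))\<^sup>2 = (norm (P {k} *v pl ys z + e k (pl ys z)))\<^sup>2" by simp
      also have "\<dots> = (norm (P {k} *v pl ys z))\<^sup>2 + (norm (e k (pl ys z)))\<^sup>2"
        by (rule pythag) (simp add: e_def P_orth)
      finally show ?thesis .
    qed
    have s: "(\<Sum>p<length (ys @ [k]). (norm (e ((ys @ [k])!p) (pl (take p (ys @ [k])) z)))\<^sup>2)
        = (\<Sum>p<length ys. (norm (e (ys!p) (pl (take p ys) z)))\<^sup>2) + (norm (e k (pl ys z)))\<^sup>2"
      by (simp add: nth_append)
    show ?case using snoc.IH py s by (simp add: pl_snoc)
  qed
  obtain xs :: "'n list" where xs: "set xs = UNIV" using finite_list[OF finite_class.finite_UNIV] by blast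
  define N where "N = length xs"
  define u where "u p = e (xs!p) (pl (take p xs) v)" for p
  define x where "x B = v - P B *v v" for B
  have star: "(\<Sum>p<N. if xs!p \<in> B then (norm (u p))\<^sup>2 else 0) \<le> (norm (x B))\<^sup>2" for B
  proof -
    have ueq: "u p = e (xs!p) (pl (take p xs) (x B))" if "xs!p \<in> B" for p
    proof -
      have "pl (take p xs) (P B *v v) \<in> Inv (U_sub B)" by (rule pl_pres[OF P_range])
      then have "pl (take p xs) (P B *v v) \<in> Inv (U_sub {xs!p})" using Inv_mono[OF that] by blast
      then have "e (xs!p) (pl (take p xs) (P B *v v)) = 0" using P_fix by (simp add: e_def)
      then show ?thesis by (simp add: u_def x_def pl_diff e_diff)
    qed
    have "(\<Sum>p<N. if xs!p \<in> B then (norm (u p))\<^sup>2 else 0)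
        \<le> (\<Sum>p<N. (norm (e (xs!p) (pl (take p xs) (x B))))\<^sup>2)"
      by (rule sum_mono) (simp add: ueq)
    also have "\<dots> \<le> (norm (x B))\<^sup>2" using tele[of "x B" xs] by (simp add: N_def)
    finally show ?thesis .
  qed
  have plv: "pl xs v = 0"
  proof -
    have inv: "\<forall>k\<in>set ks. pl ks v \<in> Inv (U_sub {k})" for ks
    proof (induction ks rule: rev_induct)
      case Nil then show ?case by simp
    next
      case (snoc l ys)
      show ?case using snoc.IH P_range Q_pres by (auto simp: pl_snoc)
    qed
    define y where "y = pl xs v"
    have yk: "\<And>k g. g \<in> U_sub {k} \<Longrightarrow> \<rho> g *v y = y" using inv[of xs] xs by (auto simp: y_def Inv_def)
    then have yT: "y \<in> TorInv \<rho>" using torus_fix[OF rep yk] by (simp add: TorInv_def)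
    have yfix: "P {k} *v y = y" for k using P_fix yk by (simp add: Inv_def)
    have "hinner y (pl ks v) = hinner y v" for ks
      by (induction ks rule: rev_induct) (simp_all add: pl_nil pl_snoc P_sa yfix)
    then have "hinner y y = hinner y v" by (simp add: y_def)
    also have "\<dots> = 0" using vperp yT by (simp add: orth_compl_def)
    finally have "(norm y)\<^sup>2 = 0" by (simp add: hinner_self)
    then show ?thesis by (simp add: y_def)
  qed
  have sumu: "(\<Sum>p<N. (norm (u p))\<^sup>2) = (norm v)\<^sup>2"
    using tele[of v xs] plv by (simp add: N_def u_def)
  define S where "S = (\<Sum>B\<in>UNIV. w B * (norm (x B))\<^sup>2)"
  have phi_le: "phi w \<le> (\<Sum>B\<in>UNIV. if i \<in> B then w B else 0)" for i
  proof -
    have "phi w \<le> (\<Sum>B\<in>{B. i \<in> B}. w B)" unfolding phi_def by (rule Min_le) auto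
    also have "\<dots> = (\<Sum>B\<in>UNIV. if i \<in> B then w B else 0)"
      by (simp add: sum.If_cases Collect_conv_if)
    finally show ?thesis .
  qed
  have Sge: "S \<ge> phi w * (norm v)\<^sup>2"
  proof -
    have "phi w * (norm v)\<^sup>2 = (\<Sum>p<N. phi w * (norm (u p))\<^sup>2)" unfolding sumu[symmetric] by (rule sum_distrib_left)
    also have "\<dots> \<le> (\<Sum>p<N. (\<Sum>B\<in>UNIV. if xs!p \<in> B then w B else 0) * (norm (u p))\<^sup>2)"
      by (rule sum_mono) (rule mult_right_mono[OF phi_le], simp)
    also have "\<dots> = (\<Sum>p<N. \<Sum>B\<in>UNIV. w B * (if xs!p \<in> B then (norm (u p))\<^sup>2 else 0))"
      by (simp add: sum_distrib_right) (rule sum.cong, simp, rule sum.cong, auto)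
    also have "\<dots> = (\<Sum>B\<in>UNIV. w B * (\<Sum>p<N. if xs!p \<in> B then (norm (u p))\<^sup>2 else 0))"
      by (subst sum.swap) (simp add: sum_distrib_left)
    also have "\<dots> \<le> S" unfolding S_def
      by (rule sum_mono) (rule mult_left_mono[OF star w0])
    finally show ?thesis .
  qed
  have Lv: "hyper_laplacian w \<mu> \<rho> *v v = (\<Sum>B\<in>UNIV. w B *\<^sub>R x B)"
    by (simp add: hyper_laplacian_def mv_sum mv_scaleR_left matrix_vector_mult_diff_rdistrib
        P_def[symmetric] x_def)
  have hx: "hinner v (x B) = of_real ((norm (x B))\<^sup>2)" for B
  proof -
    have "hinner v (x B) = hinner (x B + P B *v v) (x B)" by (simp add: x_def)
    also have "\<dots> = hinner (x B) (x B)" unfolding hinner_add_left using P_orth[of B v v] by (simp add: x_def)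
    finally show ?thesis by (simp add: hinner_self)
  qed
  have "lam * of_real ((norm v)\<^sup>2) = hinner v (lam *s v)" by (simp add: hinner_smult_right hinner_self)
  also have "\<dots> = hinner v (\<Sum>B\<in>UNIV. w B *\<^sub>R x B)" using eig Lv by simp
  also have "\<dots> = of_real S" by (simp add: hinner_sum_right hinner_scaleR_right hx S_def)
  finally have lamS: "lam * of_real ((norm v)\<^sup>2) = of_real S" .
  have nv: "(norm v)\<^sup>2 > 0" using v0 by simp
  have "lam = of_real (S / (norm v)\<^sup>2)" using lamS nv
    by (simp add: field_simps)
  then have "Im lam = 0" "Re lam = S / (norm v)\<^sup>2" by simp_all
  moreover have "S / (norm v)\<^sup>2 \<ge> phi w" using Sge nv by (simp add: pos_le_divide_eq)
  ultimately show ?thesis by simp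
qed

end
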